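(* Let $n\ge 1$ and let $k_1,\ldots,k_n\ge 3$ be integers. The disjoint union of cycles $\bigcup_{i=1}^n C_{k_i}$ is odd prime.
   Context: All graphs are finite and simple. A graph $G$ of order $N$ is called odd prime if there is a bijection $\ell$ from $V(G)$ to the set of odd integers $\{1,3,\ldots,2N-1\}$ such that $\gcd(\ell(u),\ell(v))=1$ for every edge $uv$ of $G$. $C_k$ denotes the cycle on $k$ vertices. *)

theory Defs
  imports Main
begin

definition odd_prime :: "'a set \<Rightarrow> ('a \<Rightarrow> 'a \<Rightarrow> bool) \<Rightarrow> bool" where
  "odd_prime V E \<longleftrightarrow>
     (\<exists>l :: 'a \<Rightarrow> nat. bij_betw l V {m. odd m \<and> m \<le> 2 * card V - 1} \<and>
        (\<forall>u\<in>V. \<forall>v\<in>V. E u v \<longrightarrow> gcd (l u) (l v) = 1))"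

text \<open>Disjoint union of cycles C_{k 0}, ..., C_{k (n-1)}: vertex (i,j) is the j-th
vertex of the i-th cycle, j < k i.\<close>

definition cycles_union_vertices :: "nat \<Rightarrow> (nat \<Rightarrow> nat) \<Rightarrow> (nat \<times> nat) set" where
  "cycles_union_vertices n k = {(i, j). i < n \<and> j < k i}"

definition cycles_union_edge :: "(nat \<Rightarrow> nat) \<Rightarrow> nat \<times> nat \<Rightarrow> nat \<times> nat \<Rightarrow> bool" where
  "cycles_union_edge k u v \<longleftrightarrow>
     fst u = fst v \<and>
     (snd v = (snd u + 1) mod k (fst u) \<or> snd u = (snd v + 1) mod k (fst u))"

end

theory Submission
  imports Defs
begin

definition sig :: "nat \<Rightarrow> nat \<Rightarrow> nat" where
  "sig K j = (if 2*j < K then 2*j else 2*(K-1-j)+1)"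

lemma sig_lt: "j < K \<Longrightarrow> sig K j < K"
  unfolding sig_def by auto

lemma sig_inj: "j < K \<Longrightarrow> j' < K \<Longrightarrow> sig K j = sig K j' \<Longrightarrow> j = j'"
  unfolding sig_def by (auto split: if_splits) presburger+

lemma sig_adj:
  assumes "j < K" "K \<ge> 3"
  shows "sig K ((j+1) mod K) = sig K j + 1 \<or> sig K ((j+1) mod K) = sig K j + 2 \<or>
         sig K j = sig K ((j+1) mod K) + 1 \<or> sig K j = sig K ((j+1) mod K) + 2"
proof (cases "j + 1 < K")
  case True
  then show ?thesis unfolding sig_def by auto
next
  case False
  then have "j = K - 1" using assms by auto
  then show ?thesis using assms unfolding sig_def by auto
qed

lemma gcd_odd_step:
  assumes "d = 1 \<or> d = (2::nat)"
  shows "gcd (2*a+1) (2*(a+d)+1) = 1"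
proof -
  have e: "2*(a+d)+1 = (2*a+1) + 2*d" by simp
  have "gcd (2*a+1) ((2*a+1) + 2*d) = gcd (2*a+1) (2*d)"
    by (metis gcd_add1 add.commute gcd.commute)
  also have "\<dots> = 1"
  proof -
    have "2*d = 2 \<or> 2*d = 2^2" using assms by auto
    moreover have "coprime (2*a+1) (2::nat)" by simp
    ultimately show ?thesis
      by (metis coprime_power_right_iff coprime_iff_gcd_eq_1)
  qed
  finally show ?thesis using e by simp
qed

lemma gcd_odd_adj:
  assumes "x = y + 1 \<or> x = y + 2 \<or> y = x + 1 \<or> y = x + (2::nat)"
  shows "gcd (2*(s+x)+1) (2*(s+y)+1) = 1"
  using assms
proof (elim disjE)
  assume "x = y + 1" then show ?thesis
    using gcd_odd_step[of 1 "s+y"] by (simp add: gcd.commute add.assoc)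
next
  assume "x = y + 2" then show ?thesis
    using gcd_odd_step[of 2 "s+y"] by (simp add: gcd.commute add.assoc)
next
  assume "y = x + 1" then show ?thesis
    using gcd_odd_step[of 1 "s+x"] by (simp add: add.assoc)
next
  assume "y = x + 2" then show ?thesis
    using gcd_odd_step[of 2 "s+x"] by (simp add: add.assoc)
qed

theorem theorem3p1:
  fixes n :: nat and k :: "nat \<Rightarrow> nat"
  assumes "n \<ge> 1" and "\<And>i. i < n \<Longrightarrow> k i \<ge> 3"
  shows "odd_prime (cycles_union_vertices n k) (cycles_union_edge k)"
proof -
  define V where "V = cycles_union_vertices n k"
  define S where "S i = (\<Sum>t<i. k t)" for i
  define g where "g u = S (fst u) + sig (k (fst u)) (snd u)" for u
  define N where "N = S n"
  have VS: "V = Sigma {..<n} (\<lambda>i. {..<k i})"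
    unfolding V_def cycles_union_vertices_def by auto
  have finV: "finite V" unfolding VS by auto
  have cardV: "card V = N"
    unfolding VS N_def S_def by (simp add: card_SigmaI)
  have Smono: "S i + k i \<le> S i'" if "i < i'" for i i'
  proof -
    have "S (Suc i) \<le> S i'" unfolding S_def
      by (rule sum_mono2) (use that in auto)
    then show ?thesis unfolding S_def by simp
  qed
  have gV: "g u < N" if uV: "u \<in> V" for u
  proof -
    obtain i j where u: "u = (i,j)" "i < n" "j < k i" using uV unfolding VS by auto
    have "g u < S i + k i" unfolding g_def u using sig_lt[OF u(3)] by simp
    also have "\<dots> \<le> N" proof (cases "Suc i = n")
      case True then show ?thesis unfolding N_def S_def by auto
    next
      case False then show ?thesis unfolding N_def using Smono[of i n] u by auto
    qed
    finally show ?thesis .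
  qed
  have ginj: "inj_on g V"
  proof (rule inj_onI)
    fix u v assume uv: "u \<in> V" "v \<in> V" "g u = g v"
    obtain i j where u: "u = (i,j)" "i < n" "j < k i" using uv unfolding VS by auto
    obtain i' j' where v: "v = (i',j')" "i' < n" "j' < k i'" using uv unfolding VS by auto
    have gu: "g u = S i + sig (k i) j" "g v = S i' + sig (k i') j'" unfolding g_def u v by auto
    have "i = i'"
    proof (rule ccontr)
      assume "i \<noteq> i'"
      then consider "i < i'" | "i' < i" by linarith
      then show False
      proof cases
        case 1 then show ?thesis using Smono[OF 1] sig_lt[OF u(3)] gu uv(3) by linarith
      next
        case 2 then show ?thesis using Smono[OF 2] sig_lt[OF v(3)] gu uv(3) by linarith
      qed
    qed
    then have "j = j'" using sig_inj[OF u(3)] v(3) gu uv(3) by auto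
    then show "u = v" using u v \<open>i = i'\<close> by simp
  qed
  have gbij: "bij_betw g V {..<N}"
    by (rule bij_betw_imageI[OF ginj]) (rule card_subset_eq, auto simp: gV card_image[OF ginj] cardV)
  have hbij: "bij_betw (\<lambda>m. 2*m+1) {..<N} {m. odd m \<and> m \<le> 2 * N - 1}"
  proof (rule bij_betw_imageI)
    show "inj_on (\<lambda>m. 2*m+1) {..<N}" by (auto simp: inj_on_def)
    show "(\<lambda>m. 2*m+1) ` {..<N} = {m. odd m \<and> m \<le> 2 * N - 1}"
    proof (rule set_eqI, rule iffI)
      fix x assume "x \<in> (\<lambda>m. 2*m+1) ` {..<N}" then show "x \<in> {m. odd m \<and> m \<le> 2 * N - 1}" by auto
    next
      fix x assume "x \<in> {m. odd m \<and> m \<le> 2 * N - 1}"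
      then have "odd x" "x \<le> 2*N-1" by auto
      then obtain m where "x = 2*m+1" using oddE by blast
      then show "x \<in> (\<lambda>m. 2*m+1) ` {..<N}" using \<open>x \<le> 2*N-1\<close> by auto
    qed
  qed
  define l where "l u = 2 * g u + 1" for u
  have lbij: "bij_betw l V {m. odd m \<and> m \<le> 2 * card V - 1}"
    unfolding cardV l_def using bij_betw_trans[OF gbij hbij] by (simp add: comp_def)
  have ledge: "gcd (l u) (l v) = 1" if H: "u \<in> V" "v \<in> V" "cycles_union_edge k u v" for u v
  proof -
    obtain i j where u: "u = (i,j)" "i < n" "j < k i" using H unfolding VS by auto
    obtain i' j' where v: "v = (i',j')" "i' < n" "j' < k i'" using H unfolding VS by auto
    have ii: "i' = i" using H(3) u v unfolding cycles_union_edge_def by auto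
    have lu: "l u = 2*(S i + sig (k i) j)+1" "l v = 2*(S i + sig (k i) j')+1"
      unfolding l_def g_def u v ii by auto
    from H(3) u v ii have "j' = (j+1) mod k i \<or> j = (j'+1) mod k i"
      unfolding cycles_union_edge_def by auto
    then show ?thesis
    proof
      assume "j' = (j+1) mod k i"
      then show ?thesis unfolding lu using sig_adj[OF u(3) assms(2)[OF u(2)]] gcd_odd_adj by metis
    next
      assume "j = (j'+1) mod k i"
      then show ?thesis unfolding lu using sig_adj[OF v(3)[unfolded ii] assms(2)[OF u(2)]] gcd_odd_adj by metis
    qed
  qed
  show ?thesis unfolding odd_prime_def V_def[symmetric] using lbij ledge by blast
qed

end
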